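(* For every $m\in\bar L^0$ and $t\in\mathbb{T}$, $$\operatorname{Essinf}_t m=\operatorname*{essinf}_{Z\in P_t}E[Zm\mid\mathcal{F}_t],$$ where $P_t:=\{Z\in L^0: Z\ge0,\ E[Z\mid\mathcal{F}_t]=1\}$.
   Context: Let $(\Omega,\mathcal{F},\{\mathcal{F}_t\}_{t\in\mathbb{T}},P)$ be a filtered probability space, $\mathbb{T}=\{0,\dots,T\}$, $\mathcal{F}_0$ trivial. $L^0$ (resp. $\bar L^0$) denotes $\mathcal{F}_T$-measurable random variables with values in $(-\infty,\infty)$ (resp. $[-\infty,\infty]$), identified a.s. Conventions: $\infty-\infty=-\infty+\infty=-\infty$ and $0\cdot\pm\infty=0$. For $X\in\bar L^0$ with $X^+=X\vee0$, $X^-=(-X)\vee0$, the generalized conditional expectation is $E[X\mid\mathcal{F}_t]:=\lim_{n\to\infty}E[X^+\wedge n\mid\mathcal{F}_t]-\lim_{n\to\infty}E[X^-\wedge n\mid\mathcal{F}_t]$. For bounded $X$, $\operatorname{Essinf}_tX$ is the unique (a.s.) $\mathcal{F}_t$-measurable random variable with $\operatorname{essinf}_{\omega\in A}X=\operatorname{essinf}_{\omega\in A}\operatorname{Essinf}_tX$ for all $A\in\mathcal{F}_t$, and $\operatorname{Esssup}_tX=-\operatorname{Essinf}_t(-X)$; for $X\in\bar L^0$, $\operatorname{Essinf}_tX:=\lim_n\operatorname{Essinf}_t(X^+\wedge n)-\lim_n\operatorname{Esssup}_t(X^-\wedge n)$. The essential infimum over the family is taken in $[-\infty,\infty]$. 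*)

theory Defs
  imports "HOL-Probability.Probability"
begin

definition esub :: "ereal \<Rightarrow> ereal \<Rightarrow> ereal" where
  "esub a b = (if (a = \<infinity> \<and> b = \<infinity>) \<or> (a = -\<infinity> \<and> b = -\<infinity>) then -\<infinity> else a - b)"

definition epos :: "ereal \<Rightarrow> ereal" where "epos x = max x 0"
definition eneg :: "ereal \<Rightarrow> ereal" where "eneg x = max (- x) 0"

text \<open>Generalized conditional expectation:
  E[X|G] = lim_n E[X^+ /\ n | G] - lim_n E[X^- /\ n | G]
  (the limits are monotone a.s., written as suprema).\<close>
definition gen_cond_exp :: "'a measure \<Rightarrow> 'a measure \<Rightarrow> ('a \<Rightarrow> ereal) \<Rightarrow> ('a \<Rightarrow> ereal)" where
  "gen_cond_exp M G X = (\<lambda>\<omega>.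
     esub (SUP n::nat. ereal (real_cond_exp M G (\<lambda>x. real_of_ereal (min (epos (X x)) (ereal (real n)))) \<omega>))
          (SUP n::nat. ereal (real_cond_exp M G (\<lambda>x. real_of_ereal (min (eneg (X x)) (ereal (real n)))) \<omega>)))"

definition ess_inf_on :: "'a measure \<Rightarrow> 'a set \<Rightarrow> ('a \<Rightarrow> ereal) \<Rightarrow> ereal" where
  "ess_inf_on M A X = Sup {z. AE \<omega> in M. \<omega> \<in> A \<longrightarrow> z \<le> X \<omega>}"

definition cond_essinf_bdd :: "'a measure \<Rightarrow> 'a measure \<Rightarrow> ('a \<Rightarrow> real) \<Rightarrow> ('a \<Rightarrow> real)" where
  "cond_essinf_bdd M G X = (SOME Y. Y \<in> borel_measurable G \<and>
      (\<forall>A\<in>sets G. ess_inf_on M A (\<lambda>\<omega>. ereal (X \<omega>)) = ess_inf_on M A (\<lambda>\<omega>. ereal (Y \<omega>))))"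

definition cond_esssup_bdd :: "'a measure \<Rightarrow> 'a measure \<Rightarrow> ('a \<Rightarrow> real) \<Rightarrow> ('a \<Rightarrow> real)" where
  "cond_esssup_bdd M G X = (\<lambda>\<omega>. - cond_essinf_bdd M G (\<lambda>x. - X x) \<omega>)"

definition cond_essinf :: "'a measure \<Rightarrow> 'a measure \<Rightarrow> ('a \<Rightarrow> ereal) \<Rightarrow> ('a \<Rightarrow> ereal)" where
  "cond_essinf M G X = (\<lambda>\<omega>.
     esub (SUP n::nat. ereal (cond_essinf_bdd M G (\<lambda>x. real_of_ereal (min (epos (X x)) (ereal (real n)))) \<omega>))
          (SUP n::nat. ereal (cond_esssup_bdd M G (\<lambda>x. real_of_ereal (min (eneg (X x)) (ereal (real n)))) \<omega>)))"

definition is_ess_inf_family :: "'a measure \<Rightarrow> 'a measure \<Rightarrow> ('a \<Rightarrow> ereal) set \<Rightarrow> ('a \<Rightarrow> ereal) \<Rightarrow> bool" where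
  "is_ess_inf_family M N S Y \<longleftrightarrow> Y \<in> borel_measurable N \<and>
     (\<forall>X\<in>S. AE \<omega> in M. Y \<omega> \<le> X \<omega>) \<and>
     (\<forall>Y'. Y' \<in> borel_measurable N \<and> (\<forall>X\<in>S. AE \<omega> in M. Y' \<omega> \<le> X \<omega>) \<longrightarrow> (AE \<omega> in M. Y' \<omega> \<le> Y \<omega>))"

definition ess_inf_family :: "'a measure \<Rightarrow> 'a measure \<Rightarrow> ('a \<Rightarrow> ereal) set \<Rightarrow> ('a \<Rightarrow> ereal)" where
  "ess_inf_family M N S = (SOME Y. is_ess_inf_family M N S Y)"

definition Pset :: "'a measure \<Rightarrow> 'a measure \<Rightarrow> 'a measure \<Rightarrow> ('a \<Rightarrow> real) set" where
  "Pset M FT Ft = {Z. Z \<in> borel_measurable FT \<and> (AE \<omega> in M. 0 \<le> Z \<omega>) \<and>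
      (AE \<omega> in M. gen_cond_exp M Ft (\<lambda>x. ereal (Z x)) \<omega> = 1)}"

end

theory Submission
  imports Defs
begin


lemma enn2ereal_SUP_nat: "enn2ereal (SUP n::nat. c n) = (SUP n. enn2ereal (c n))"
  by (simp add: Sup_ennreal.rep_eq image_comp sup_max max_def SUP_upper2 enn2ereal_nonneg)

locale PS = prob_space +
  fixes G :: "'a measure"
  assumes subG: "subalgebra M G"

sublocale PS \<subseteq> fms: finite_measure_subalgebra M G
  by unfold_locales (rule subG)

context PS begin

abbreviation C where "C f \<equiv> nn_cond_exp M G f"

lemma measG_M[measurable_dest]: "f \<in> borel_measurable G \<Longrightarrow> f \<in> borel_measurable M"
  using measurable_from_subalg[OF subG] by blast

lemma setG_M: "S \<in> sets G \<Longrightarrow> S \<in> sets M"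
  using subG by (auto simp: subalgebra_def)

lemma C_const: "AE x in M. C (\<lambda>_. c) x = c"
  using fms.nn_cond_exp_F_meas[of "\<lambda>_. c"] by auto

lemma C_MCT:
  assumes [measurable]: "\<And>n. f n \<in> borel_measurable M" and inc: "\<And>x. incseq (\<lambda>n. f n x)"
  shows "AE x in M. (SUP n. C (f n) x) = C (\<lambda>x. SUP n. f n x) x"
proof (rule fms.nn_cond_exp_charact)
  fix A assume A[measurable]: "A \<in> sets G"
  have AM[measurable]: "A \<in> sets M" using setG_M[OF A] .
  have mono: "AE x in M. \<forall>n. C (f n) x \<le> C (f (Suc n)) x"
    unfolding AE_all_countable
    by (intro allI fms.nn_cond_exp_mono) (auto intro: incseq_SucD[OF inc])
  have "(\<integral>\<^sup>+x\<in>A. (SUP n. C (f n) x) \<partial>M) = (\<integral>\<^sup>+x. (SUP n. indicator A x * C (f n) x) \<partial>M)"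
    by (simp add: SUP_mult_left_ennreal mult.commute)
  also have "\<dots> = (SUP n. \<integral>\<^sup>+x. indicator A x * C (f n) x \<partial>M)"
  proof (rule nn_integral_monotone_convergence_SUP_AE)
    fix i show "AE x in M. indicator A x * C (f i) x \<le> indicator A x * C (f (Suc i)) x"
      using mono by (auto elim!: eventually_mono intro: mult_left_mono)
  qed auto
  also have "\<dots> = (SUP n. \<integral>\<^sup>+x. indicator A x * f n x \<partial>M)"
    by (simp add: fms.nn_cond_exp_intg)
  also have "\<dots> = (\<integral>\<^sup>+x. (SUP n. indicator A x * f n x) \<partial>M)"
    by (rule nn_integral_monotone_convergence_SUP[symmetric])
       (auto simp: incseq_def le_fun_def intro: mult_left_mono incseqD[OF inc])
  also have "\<dots> = (\<integral>\<^sup>+x\<in>A. (SUP n. f n x) \<partial>M)"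
    by (simp add: SUP_mult_left_ennreal mult.commute)
  finally show "(\<integral>\<^sup>+x\<in>A. (SUP n. f n x) \<partial>M) = (\<integral>\<^sup>+x\<in>A. (SUP n. C (f n) x) \<partial>M)" by simp
qed auto

lemma ereal_enn2real: "(y::ennreal) < top \<Longrightarrow> ereal (enn2real y) = enn2ereal y"
  by (cases y rule: ennreal_cases) (simp_all add: enn2ereal_ennreal)

lemma rce_nonneg:
  assumes [measurable]: "f \<in> borel_measurable M" and b: "\<And>x. 0 \<le> f x \<and> f x \<le> c"
  shows "AE x in M. ereal (real_cond_exp M G f x) = enn2ereal (C (\<lambda>x. ennreal (f x)) x)"
proof -
  have z: "(\<lambda>x. ennreal (- f x)) = (\<lambda>_. 0)" using b by (auto simp: fun_eq_iff ennreal_neg)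
  have "AE x in M. C (\<lambda>x. ennreal (f x)) x \<le> C (\<lambda>_. ennreal c) x"
    by (rule fms.nn_cond_exp_mono) (use b in \<open>auto intro: ennreal_leI\<close>)
  moreover note C_const[of "ennreal c"] C_const[of 0]
  ultimately show ?thesis
  proof eventually_elim
    case (elim x)
    have "C (\<lambda>x. ennreal (f x)) x < top"
      using elim(1,2) ennreal_less_top[of c] by (metis order.strict_trans1)
    then show ?case using elim(3) unfolding real_cond_exp_def z
      by (simp add: ereal_enn2real)
  qed
qed

lemma trunc_eq: "n \<ge> 0 \<Longrightarrow> ennreal (real_of_ereal (min (epos w) (ereal n))) = min (e2ennreal w) (ennreal n)"
proof (cases w)
  case (real r)
  assume n: "n \<ge> 0"
  show ?thesis
  proof (cases "r \<le> 0")
    case True then show ?thesis using real n by (simp add: epos_def ennreal_neg)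
  next
    case False then show ?thesis using real n
      by (cases "r \<le> n") (simp_all add: epos_def min_def ennreal_le_iff)
  qed
qed (simp_all add: epos_def e2ennreal_neg)

lemma trunc_bd: "n \<ge> 0 \<Longrightarrow> 0 \<le> real_of_ereal (min (epos w) (ereal n)) \<and> real_of_ereal (min (epos w) (ereal n)) \<le> n"
  by (cases w) (auto simp: epos_def min_def max_def)

lemma SUP_min_nat: "(SUP n::nat. min (y::ennreal) (ennreal (real n))) = y"
proof (rule antisym)
  show "(SUP n::nat. min y (ennreal (real n))) \<le> y" by (auto intro: SUP_least)
  show "y \<le> (SUP n::nat. min y (ennreal (real n)))"
  proof (cases "y = top")
    case True
    have st: "(SUP n::nat. ennreal (real n)) = top" using ennreal_SUP_of_nat_eq_top by (simp add: ennreal_of_nat_eq_real_of_nat)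
    have "(\<lambda>n::nat. min y (ennreal (real n))) = (\<lambda>n. ennreal (real n))" using True by (simp add: fun_eq_iff)
    then show ?thesis unfolding True using st by (simp only:)
  next
    case False
    then obtain r where r: "y = ennreal r" "r \<ge> 0" by (cases y) auto
    obtain n::nat where "r \<le> real n" using real_nat_ceiling_ge by blast
    then have "y = min y (ennreal (real n))" using r by (simp add: min_def ennreal_le_iff)
    then show ?thesis by (metis SUP_upper UNIV_I)
  qed
qed

lemma piece:
  assumes [measurable]: "W \<in> borel_measurable M"
  shows "AE x in M. (SUP n::nat. ereal (real_cond_exp M G (\<lambda>x. real_of_ereal (min (epos (W x)) (ereal (real n)))) x))
     = enn2ereal (C (\<lambda>x. e2ennreal (W x)) x)"
proof -
  define f where "f n x = min (e2ennreal (W x)) (ennreal (real n))" for n::nat and x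
  have fm[measurable]: "f n \<in> borel_measurable M" for n unfolding f_def by measurable
  have inc: "incseq (\<lambda>n. f n x)" for x unfolding f_def incseq_def
  proof (intro allI impI)
    fix m n :: nat assume "m \<le> n"
    then have "ennreal (real m) \<le> ennreal (real n)" by (intro ennreal_leI) simp
    then show "min (e2ennreal (W x)) (ennreal (real m)) \<le> min (e2ennreal (W x)) (ennreal (real n))"
      by (simp add: min.coboundedI2)
  qed
  have e: "(\<lambda>x. ennreal (real_of_ereal (min (epos (W x)) (ereal (real n))))) = f n" for n
    unfolding f_def by (simp add: fun_eq_iff trunc_eq)
  have fs: "(\<lambda>x. SUP n. f n x) = (\<lambda>x. e2ennreal (W x))"
    unfolding f_def by (simp add: SUP_min_nat)
  have "AE x in M. \<forall>n. ereal (real_cond_exp M G (\<lambda>x. real_of_ereal (min (epos (W x)) (ereal (real n)))) x) = enn2ereal (C (f n) x)"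
    unfolding AE_all_countable
  proof
    fix n
    show "AE x in M. ereal (real_cond_exp M G (\<lambda>x. real_of_ereal (min (epos (W x)) (ereal (real n)))) x) = enn2ereal (C (f n) x)"
      using rce_nonneg[of "\<lambda>x. real_of_ereal (min (epos (W x)) (ereal (real n)))" "real n", OF _ trunc_bd]
      unfolding e by (simp add: epos_def)
  qed
  moreover have "AE x in M. (SUP n. C (f n) x) = C (\<lambda>x. e2ennreal (W x)) x"
    unfolding fs[symmetric] by (rule C_MCT) (auto intro: inc)
  ultimately show ?thesis
    by eventually_elim (simp add: enn2ereal_SUP_nat[symmetric])
qed

lemma gce:
  assumes [measurable]: "X \<in> borel_measurable M"
  shows "AE x in M. gen_cond_exp M G X x =
     esub (enn2ereal (C (\<lambda>x. e2ennreal (X x)) x)) (enn2ereal (C (\<lambda>x. e2ennreal (- X x)) x))"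
proof -
  have en: "eneg e = epos (- e)" for e unfolding eneg_def epos_def ..
  have "AE x in M. (SUP n::nat. ereal (real_cond_exp M G (\<lambda>x. real_of_ereal (min (epos (- X x)) (ereal (real n)))) x))
     = enn2ereal (C (\<lambda>x. e2ennreal (- X x)) x)" by (rule piece) simp
  with piece[OF assms] show ?thesis
    unfolding gen_cond_exp_def en by eventually_elim simp
qed

end


lemma ess_le: "(ereal q \<le> ess_inf_on M A f) \<longleftrightarrow> (AE \<omega> in M. \<omega> \<in> A \<longrightarrow> ereal q \<le> f \<omega>)"
proof
  assume "AE \<omega> in M. \<omega> \<in> A \<longrightarrow> ereal q \<le> f \<omega>"
  then show "ereal q \<le> ess_inf_on M A f" unfolding ess_inf_on_def by (auto intro: Sup_upper)
next
  assume q: "ereal q \<le> ess_inf_on M A f"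
  have "AE \<omega> in M. \<omega> \<in> A \<longrightarrow> ereal (q - 1 / (real k + 1)) \<le> f \<omega>" for k :: nat
  proof -
    have "ereal (q - 1 / (real k + 1)) < ess_inf_on M A f"
      using q by (rule less_le_trans[rotated]) simp
    then obtain z where "z \<in> {z. AE \<omega> in M. \<omega> \<in> A \<longrightarrow> z \<le> f \<omega>}" "ereal (q - 1 / (real k + 1)) < z"
      unfolding ess_inf_on_def less_Sup_iff by blast
    then show ?thesis by (auto elim!: eventually_mono)
  qed
  then have "AE \<omega> in M. \<forall>k::nat. \<omega> \<in> A \<longrightarrow> ereal (q - 1 / (real k + 1)) \<le> f \<omega>"
    unfolding AE_all_countable by blast
  then show "AE \<omega> in M. \<omega> \<in> A \<longrightarrow> ereal q \<le> f \<omega>"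
  proof (rule eventually_mono, intro impI)
    fix \<omega> assume h: "\<forall>k::nat. \<omega> \<in> A \<longrightarrow> ereal (q - 1 / (real k + 1)) \<le> f \<omega>" and "\<omega> \<in> A"
    then have h: "\<And>k::nat. ereal (q - 1 / (real k + 1)) \<le> f \<omega>" by blast
    show "ereal q \<le> f \<omega>"
    proof (cases "f \<omega>")
      case (real r)
      show ?thesis
      proof (rule ccontr)
        assume "\<not> ereal q \<le> f \<omega>"
        then have "r < q" using real by simp
        then obtain k :: nat where k: "inverse (real (Suc k)) < q - r"
          using reals_Archimedean by (metis diff_gt_0_iff_gt)
        have "q - 1 / (real k + 1) \<le> r" using h[of k] real by simp
        with k show False by (simp add: field_simps)
      qed
    qed (use h[of 0] in auto)
  qed
qed

lemma AE_le_rat: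
  fixes U V :: "'a \<Rightarrow> real"
  shows "(AE x in M. U x \<le> V x) \<longleftrightarrow> (\<forall>q\<in>\<rat>. AE x in M. q \<le> U x \<longrightarrow> q \<le> V x)"
proof
  assume "AE x in M. U x \<le> V x" then show "\<forall>q\<in>\<rat>. AE x in M. q \<le> U x \<longrightarrow> q \<le> V x"
    by (auto elim!: eventually_mono)
next
  assume "\<forall>q\<in>\<rat>. AE x in M. q \<le> U x \<longrightarrow> q \<le> V x"
  then have "AE x in M. \<forall>q\<in>\<rat>. q \<le> U x \<longrightarrow> q \<le> V x"
    by (subst AE_ball_countable) (auto simp: countable_rat)
  then show "AE x in M. U x \<le> V x"
  proof (rule eventually_mono)
    fix x assume h: "\<forall>q\<in>\<rat>. q \<le> U x \<longrightarrow> q \<le> V x"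
    show "U x \<le> V x"
    proof (rule ccontr)
      assume "\<not> U x \<le> V x"
      then obtain q where "q \<in> \<rat>" "V x < q" "q < U x" using Rats_dense_in_real by (meson not_le)
      with h show False by auto
    qed
  qed
qed

context PS begin

lemma K_char:
  fixes X Y0 U :: "'a \<Rightarrow> real"
  assumes Y0[measurable]: "Y0 \<in> borel_measurable G"
    and ch: "\<forall>A\<in>sets G. ess_inf_on M A (\<lambda>\<omega>. ereal (X \<omega>)) = ess_inf_on M A (\<lambda>\<omega>. ereal (Y0 \<omega>))"
    and U[measurable]: "U \<in> borel_measurable G"
  shows "(AE x in M. U x \<le> X x) \<longleftrightarrow> (AE x in M. U x \<le> Y0 x)"
proof -
  have eq: "(AE x in M. q \<le> U x \<longrightarrow> q \<le> V x) \<longleftrightarrow> ereal q \<le> ess_inf_on M {x\<in>space G. q \<le> U x} (\<lambda>\<omega>. ereal (V \<omega>))"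
    for q and V :: "'a \<Rightarrow> real"
    unfolding ess_le using subG[unfolded subalgebra_def]
    by (intro iffI) (auto elim!: eventually_mono[OF AE_space[unfolded eventually_ae_filter[symmetric]]] AE_mp[OF AE_space] simp: )
  have S: "{x\<in>space G. q \<le> U x} \<in> sets G" for q by measurable
  show ?thesis unfolding AE_le_rat[of U X] AE_le_rat[of U Y0] eq using ch S by simp
qed

end


context PS begin

lemma bdd_integrable: "f \<in> borel_measurable M \<Longrightarrow> (\<And>x. \<bar>f x\<bar> \<le> c) \<Longrightarrow> integrable M f"
  for f :: "'a \<Rightarrow> real"
  by (rule integrable_const_bound[where B=c]) auto

lemma ex_max_minorant:
  fixes X :: "'a \<Rightarrow> real"
  assumes X[measurable]: "X \<in> borel_measurable M" and b: "\<And>x. \<bar>X x\<bar> \<le> c"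
  shows "\<exists>Y\<in>borel_measurable G. (\<forall>x. \<bar>Y x\<bar> \<le> c) \<and>
     (\<forall>U\<in>borel_measurable G. (AE x in M. U x \<le> X x) \<longleftrightarrow> (AE x in M. U x \<le> Y x))"
proof -
  have c0: "0 \<le> c" using b[of undefined] by linarith
  define W where "W = {W. W \<in> borel_measurable G \<and> (\<forall>x. \<bar>W x\<bar> \<le> c) \<and> (AE x in M. W x \<le> X x)}"
  have Wi: "w \<in> W \<Longrightarrow> integrable M w" for w
    unfolding W_def by (auto intro: bdd_integrable)
  have Wle: "w \<in> W \<Longrightarrow> integral\<^sup>L M w \<le> c" for w
  proof -
    assume w: "w \<in> W"
    have "integral\<^sup>L M w \<le> integral\<^sup>L M (\<lambda>_. c)"
      using w by (intro integral_mono[OF Wi[OF w] integrable_const]) (auto simp: W_def abs_le_iff)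
    then show ?thesis by (simp add: prob_space)
  qed
  define s where "s = (SUP w\<in>W. integral\<^sup>L M w)"
  have mW: "(\<lambda>_. - c) \<in> W" unfolding W_def using b c0 by (auto simp: abs_le_iff intro!: AE_I2) (metis add.inverse_inverse neg_le_iff_le)
  have bdd: "bdd_above ((\<lambda>w. integral\<^sup>L M w) ` W)" using Wle by (intro bdd_aboveI[where M=c]) auto
  have sup: "w \<in> W \<Longrightarrow> integral\<^sup>L M w \<le> s" for w unfolding s_def using bdd by (rule cSUP_upper2) auto
  have "\<exists>w\<in>W. s - 1 / (real k + 1) < integral\<^sup>L M w" for k :: nat
  proof -
    have "s - 1 / (real k + 1) < s" by simp
    then show ?thesis unfolding s_def using mW bdd by (subst (asm) less_cSUP_iff) auto
  qed
  then obtain Wk where Wk: "\<And>k. Wk k \<in> W" "\<And>k. s - 1 / (real k + 1) < integral\<^sup>L M (Wk k)"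
    by metis
  have Wkm[measurable]: "Wk k \<in> borel_measurable G" for k using Wk unfolding W_def by blast
  have Wkb: "\<bar>Wk k x\<bar> \<le> c" for k x using Wk unfolding W_def by blast
  define Y where "Y x = (SUP k. Wk k x)" for x
  have bddk: "bdd_above (range (\<lambda>k. Wk k x))" for x using Wkb by (auto intro!: bdd_aboveI simp: abs_le_iff)
  have Ym[measurable]: "Y \<in> borel_measurable G" unfolding Y_def
    by (rule borel_measurable_cSUP) (auto intro: bddk)
  have Yup: "Wk k x \<le> Y x" for k x unfolding Y_def by (rule cSUP_upper[OF UNIV_I bddk])
  have Yb: "\<bar>Y x\<bar> \<le> c" for x
  proof -
    have "Y x \<le> c" unfolding Y_def using Wkb by (auto intro!: cSUP_least simp: abs_le_iff)
    moreover have "- c \<le> Y x" using Yup[of 0 x] Wkb[of 0 x] by (auto simp: abs_le_iff)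
    ultimately show ?thesis by auto
  qed
  have "AE x in M. \<forall>k. Wk k x \<le> X x" unfolding AE_all_countable using Wk unfolding W_def by blast
  then have YX: "AE x in M. Y x \<le> X x" unfolding Y_def by (auto elim!: eventually_mono intro: cSUP_least)
  have YW: "Y \<in> W" unfolding W_def using Yb YX by auto
  have intY: "integral\<^sup>L M Y = s"
  proof (rule antisym)
    show "integral\<^sup>L M Y \<le> s" using YW by (rule sup)
    show "s \<le> integral\<^sup>L M Y"
    proof (rule field_le_epsilon)
      fix e :: real assume "0 < e"
      then obtain k :: nat where k: "inverse (real (Suc k)) < e" using reals_Archimedean by blast
      have "integral\<^sup>L M (Wk k) \<le> integral\<^sup>L M Y"
        by (intro integral_mono Wi Wk YW Yup)
      moreover have "1 / (real k + 1) < e" using k by (simp add: inverse_eq_divide add.commute)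
      ultimately show "s \<le> integral\<^sup>L M Y + e" using Wk(2)[of k] by linarith
    qed
  qed
  show ?thesis
  proof (intro bexI conjI ballI allI Yb iffI)
    fix U :: "'a \<Rightarrow> real" assume U[measurable]: "U \<in> borel_measurable G"
    {
      assume UX: "AE x in M. U x \<le> X x"
      define V where "V x = min c (max (U x) (Y x))" for x
      have Vm[measurable]: "V \<in> borel_measurable G" unfolding V_def by measurable
      have "AE x in M. V x \<le> X x" using UX YX by eventually_elim (auto simp: V_def)
      moreover have "\<bar>V x\<bar> \<le> c" for x using Yb[of x] c0 by (auto simp: V_def abs_le_iff)
      ultimately have VW: "V \<in> W" unfolding W_def by auto
      have "integral\<^sup>L M (\<lambda>x. V x - Y x) = 0"
      proof -
        have "integral\<^sup>L M (\<lambda>x. V x - Y x) = integral\<^sup>L M V - integral\<^sup>L M Y"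
          by (intro Bochner_Integration.integral_diff Wi VW YW)
        moreover have "integral\<^sup>L M V \<le> s" using VW by (rule sup)
        moreover have "0 \<le> integral\<^sup>L M (\<lambda>x. V x - Y x)"
          using Yb by (intro integral_nonneg_AE) (auto simp: V_def abs_le_iff)
        ultimately show ?thesis using intY by linarith
      qed
      then have "AE x in M. V x - Y x = 0"
      proof (subst (asm) integral_nonneg_eq_0_iff_AE)
        show "integrable M (\<lambda>x. V x - Y x)" using Wi[OF VW] Wi[OF YW] by auto
        show "AE x in M. 0 \<le> V x - Y x" using Yb by (auto simp: V_def abs_le_iff)
      qed
      then show "AE x in M. U x \<le> Y x" using UX
      proof eventually_elim
        case (elim x) then show ?case using b[of x] by (auto simp: V_def abs_le_iff min_def max_def split: if_splits)
      qed
    }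
    {
      assume "AE x in M. U x \<le> Y x"
      with YX show "AE x in M. U x \<le> X x" by eventually_elim auto
    }
  qed (use Ym Yb in auto)
qed

end


context PS begin

lemma char_of_max:
  fixes X Y :: "'a \<Rightarrow> real"
  assumes X[measurable]: "X \<in> borel_measurable M" and b: "\<And>x. \<bar>X x\<bar> \<le> c"
    and Y[measurable]: "Y \<in> borel_measurable G"
    and mx: "\<forall>U\<in>borel_measurable G. (AE x in M. U x \<le> X x) \<longleftrightarrow> (AE x in M. U x \<le> Y x)"
  shows "\<forall>A\<in>sets G. ess_inf_on M A (\<lambda>\<omega>. ereal (X \<omega>)) = ess_inf_on M A (\<lambda>\<omega>. ereal (Y \<omega>))"
proof
  fix A assume A[measurable]: "A \<in> sets G"
  have bx: "- c \<le> X x" for x using b[of x] by (auto simp: abs_le_iff)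
  have mc: "AE x in M. - c \<le> Y x"
  proof -
    have "AE x in M. - c \<le> X x" using bx by auto
    then show ?thesis using mx by auto
  qed
  have "(AE \<omega> in M. \<omega> \<in> A \<longrightarrow> z \<le> ereal (X \<omega>)) \<longleftrightarrow> (AE \<omega> in M. \<omega> \<in> A \<longrightarrow> z \<le> ereal (Y \<omega>))" for z
  proof (cases z)
    case (real r)
    define U where "U x = (if x \<in> A then r else - c)" for x
    have Um: "U \<in> borel_measurable G" unfolding U_def by measurable
    have "(AE \<omega> in M. \<omega> \<in> A \<longrightarrow> z \<le> ereal (X \<omega>)) \<longleftrightarrow> (AE x in M. U x \<le> X x)"
      unfolding real U_def using bx by (intro AE_cong) auto
    also have "\<dots> \<longleftrightarrow> (AE x in M. U x \<le> Y x)" using mx Um by blast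
    also have "\<dots> \<longleftrightarrow> (AE \<omega> in M. \<omega> \<in> A \<longrightarrow> z \<le> ereal (Y \<omega>))"
    proof
      assume "AE x in M. U x \<le> Y x" then show "AE \<omega> in M. \<omega> \<in> A \<longrightarrow> z \<le> ereal (Y \<omega>)"
        by eventually_elim (auto simp: U_def real)
    next
      assume "AE \<omega> in M. \<omega> \<in> A \<longrightarrow> z \<le> ereal (Y \<omega>)" with mc show "AE x in M. U x \<le> Y x"
        by eventually_elim (auto simp: U_def real)
    qed
    finally show ?thesis .
  qed simp_all
  then show "ess_inf_on M A (\<lambda>\<omega>. ereal (X \<omega>)) = ess_inf_on M A (\<lambda>\<omega>. ereal (Y \<omega>))"
    unfolding ess_inf_on_def by simp
qed

lemma cebdd:
  fixes X :: "'a \<Rightarrow> real"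
  assumes X[measurable]: "X \<in> borel_measurable M" and b: "\<And>x. \<bar>X x\<bar> \<le> c"
  shows "cond_essinf_bdd M G X \<in> borel_measurable G \<and>
    (\<forall>U\<in>borel_measurable G. (AE x in M. U x \<le> X x) \<longleftrightarrow> (AE x in M. U x \<le> cond_essinf_bdd M G X x))"
proof -
  obtain Y where Y: "Y \<in> borel_measurable G"
    "\<forall>U\<in>borel_measurable G. (AE x in M. U x \<le> X x) \<longleftrightarrow> (AE x in M. U x \<le> Y x)"
    using ex_max_minorant[OF X b] by blast
  have "\<exists>Y. Y \<in> borel_measurable G \<and>
      (\<forall>A\<in>sets G. ess_inf_on M A (\<lambda>\<omega>. ereal (X \<omega>)) = ess_inf_on M A (\<lambda>\<omega>. ereal (Y \<omega>)))"
    using char_of_max[OF X b Y(1) Y(2)] Y(1) by blast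
  then have S: "cond_essinf_bdd M G X \<in> borel_measurable G \<and>
      (\<forall>A\<in>sets G. ess_inf_on M A (\<lambda>\<omega>. ereal (X \<omega>)) = ess_inf_on M A (\<lambda>\<omega>. ereal (cond_essinf_bdd M G X \<omega>)))"
    unfolding cond_essinf_bdd_def by (rule someI_ex)
  show ?thesis using S K_char[of "cond_essinf_bdd M G X" X] by blast
qed

end


definition Xp :: "('a \<Rightarrow> ereal) \<Rightarrow> nat \<Rightarrow> 'a \<Rightarrow> real" where
  "Xp m n x = real_of_ereal (min (epos (m x)) (ereal (real n)))"
definition Xm :: "('a \<Rightarrow> ereal) \<Rightarrow> nat \<Rightarrow> 'a \<Rightarrow> real" where
  "Xm m n x = real_of_ereal (min (eneg (m x)) (ereal (real n)))"

lemma trunc_ereal: "n \<ge> 0 \<Longrightarrow> 0 \<le> w \<Longrightarrow> ereal (real_of_ereal (min w (ereal n))) = min w (ereal n)"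
  by (cases w) (auto simp: min_def)

lemma epos_nn: "0 \<le> epos w" and eneg_nn: "0 \<le> eneg w"
  by (auto simp: epos_def eneg_def)

lemma Xp_e: "ereal (Xp m n x) = min (epos (m x)) (ereal (real n))"
  unfolding Xp_def by (rule trunc_ereal) (auto simp: epos_nn)
lemma Xm_e: "ereal (Xm m n x) = min (eneg (m x)) (ereal (real n))"
  unfolding Xm_def by (rule trunc_ereal) (auto simp: eneg_nn)

lemma Xp_b: "0 \<le> Xp m n x \<and> Xp m n x \<le> real n"
proof -
  have "0 \<le> ereal (Xp m n x) \<and> ereal (Xp m n x) \<le> ereal (real n)"
    unfolding Xp_e using epos_nn[of "m x"] by auto
  then show ?thesis by simp
qed
lemma Xm_b: "0 \<le> Xm m n x \<and> Xm m n x \<le> real n"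
proof -
  have "0 \<le> ereal (Xm m n x) \<and> ereal (Xm m n x) \<le> ereal (real n)"
    unfolding Xm_e using eneg_nn[of "m x"] by auto
  then show ?thesis by simp
qed
lemma Xp_abs: "\<bar>Xp m n x\<bar> \<le> real n" using Xp_b[of m n x] by linarith
lemma Xm_abs: "\<bar>Xm m n x\<bar> \<le> real n" using Xm_b[of m n x] by linarith

lemma SUP_min_ereal: "0 \<le> (y::ereal) \<Longrightarrow> (SUP n::nat. min y (ereal (real n))) = y"
proof (rule antisym)
  show "(SUP n::nat. min y (ereal (real n))) \<le> y" by (auto intro: SUP_least)
  assume y0: "0 \<le> y"
  show "y \<le> (SUP n::nat. min y (ereal (real n)))"
  proof (cases y)
    case (real r)
    obtain n::nat where "r \<le> real n" using real_nat_ceiling_ge by blast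
    then have "y = min y (ereal (real n))" using real by (simp add: min_def)
    then show ?thesis by (metis SUP_upper UNIV_I)
  next
    case PInf
    have "(SUP n::nat. ereal (real n)) = \<infinity>" by (rule SUP_nat_Infty)
    then show ?thesis using PInf by simp
  qed (use y0 in simp)
qed

context PS begin

context
  fixes m :: "'a \<Rightarrow> ereal"
  assumes mM[measurable]: "m \<in> borel_measurable M"
begin

definition "a n = cond_essinf_bdd M G (Xp m n)"
definition "b n = cond_esssup_bdd M G (Xm m n)"
definition "AA x = (SUP n. ereal (a n x))"
definition "BB x = (SUP n. ereal (b n x))"

lemma Xpm[measurable]: "Xp m n \<in> borel_measurable M" unfolding Xp_def epos_def by measurable
lemma Xmm[measurable]: "Xm m n \<in> borel_measurable M" unfolding Xm_def eneg_def by measurable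

lemma Ka: "a n \<in> borel_measurable G \<and>
   (\<forall>U\<in>borel_measurable G. (AE x in M. U x \<le> Xp m n x) \<longleftrightarrow> (AE x in M. U x \<le> a n x))"
  unfolding a_def by (rule cebdd[where c="real n"]) (auto simp: Xp_abs)

lemma Kb: "b n \<in> borel_measurable G \<and>
   (\<forall>V\<in>borel_measurable G. (AE x in M. Xm m n x \<le> V x) \<longleftrightarrow> (AE x in M. b n x \<le> V x))"
proof -
  have c: "cond_essinf_bdd M G (\<lambda>x. - Xm m n x) \<in> borel_measurable G \<and>
    (\<forall>U\<in>borel_measurable G. (AE x in M. U x \<le> - Xm m n x) \<longleftrightarrow> (AE x in M. U x \<le> cond_essinf_bdd M G (\<lambda>x. - Xm m n x) x))"
    by (rule cebdd[where c="real n"]) (auto simp: Xm_abs)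
  show ?thesis
  proof (intro conjI ballI)
    show "b n \<in> borel_measurable G" using c[THEN conjunct1] unfolding b_def cond_esssup_bdd_def
      by (rule borel_measurable_uminus)
    fix V :: "'a \<Rightarrow> real" assume V[measurable]: "V \<in> borel_measurable G"
    have mV: "(\<lambda>x. - V x) \<in> borel_measurable G" by measurable
    have "(AE x in M. - V x \<le> - Xm m n x) \<longleftrightarrow> (AE x in M. - V x \<le> cond_essinf_bdd M G (\<lambda>x. - Xm m n x) x)"
      using c[THEN conjunct2, rule_format, OF mV] .
    then show "(AE x in M. Xm m n x \<le> V x) \<longleftrightarrow> (AE x in M. b n x \<le> V x)"
      unfolding b_def cond_esssup_bdd_def by (simp add: minus_le_iff)
  qed
qed

lemma am[measurable]: "a n \<in> borel_measurable G" using Ka[THEN conjunct1] .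
lemma bm[measurable]: "b n \<in> borel_measurable G" using Kb[THEN conjunct1] .
lemma AAm[measurable]: "AA \<in> borel_measurable G" unfolding AA_def by measurable
lemma BBm[measurable]: "BB \<in> borel_measurable G" unfolding BB_def by measurable

lemma a_le: "AE x in M. a n x \<le> Xp m n x" using Ka[of n, THEN conjunct2, rule_format, OF am[of n]] by simp
lemma a_nn: "AE x in M. 0 \<le> a n x"
proof -
  have "AE x in M. (\<lambda>_. 0) x \<le> Xp m n x" by (intro AE_I2) (simp add: Xp_b)
  then show ?thesis using Ka[of n, THEN conjunct2, rule_format, OF borel_measurable_const[of 0 G]] by simp
qed
lemma b_ge: "AE x in M. Xm m n x \<le> b n x" using Kb[of n, THEN conjunct2, rule_format, OF bm[of n]] by simp

lemma AA_nn: "AE x in M. 0 \<le> AA x"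
  using a_nn[of 0] by eventually_elim (auto simp: AA_def intro: SUP_upper2[of 0])

lemma BB_nn: "AE x in M. 0 \<le> BB x"
  using b_ge[of 0]
proof eventually_elim
  case (elim x)
  then have "0 \<le> b 0 x" using Xm_b[of m 0 x] by linarith
  then show ?case unfolding BB_def by (intro SUP_upper2[of 0]) auto
qed

lemma AA_le: "AE x in M. AA x \<le> epos (m x)"
proof -
  have "AE x in M. \<forall>n. a n x \<le> Xp m n x" using a_le by (simp add: AE_all_countable)
  then show ?thesis
  proof eventually_elim
    case (elim x)
    have "ereal (a n x) \<le> epos (m x)" for n
    proof -
      have "ereal (a n x) \<le> ereal (Xp m n x)" using elim by simp
      also have "\<dots> \<le> epos (m x)" unfolding Xp_e by simp
      finally show ?thesis .
    qed
    then show ?case unfolding AA_def by (auto intro: SUP_least)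
  qed
qed

lemma BB_ge: "AE x in M. eneg (m x) \<le> BB x"
proof -
  have "AE x in M. \<forall>n. Xm m n x \<le> b n x" using b_ge by (simp add: AE_all_countable)
  then show ?thesis
  proof eventually_elim
    case (elim x)
    have "eneg (m x) = (SUP n::nat. min (eneg (m x)) (ereal (real n)))"
      by (rule SUP_min_ereal[symmetric]) (rule eneg_nn)
    also have "\<dots> \<le> BB x" unfolding BB_def
    proof (rule SUP_mono)
      fix n assume "n \<in> (UNIV::nat set)"
      have "min (eneg (m x)) (ereal (real n)) \<le> ereal (b n x)"
        unfolding Xm_e[symmetric] using elim by simp
      then show "\<exists>k\<in>UNIV. min (eneg (m x)) (ereal (real n)) \<le> ereal (b k x)" by blast
    qed
    finally show ?case .
  qed
qed


lemma F4: "AE x in M. 0 < AA x \<longrightarrow> BB x = 0"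
proof -
  have "AE x in M. 0 < a n x \<longrightarrow> b k x \<le> 0" for n k
  proof -
    define V where "V x = (if 0 < a n x then 0 else real k)" for x
    have Vm: "V \<in> borel_measurable G" unfolding V_def by measurable
    have "AE x in M. Xm m k x \<le> V x" using a_le[of n]
    proof eventually_elim
      case (elim x)
      show ?case
      proof (cases "0 < a n x")
        case True
        then have "0 < Xp m n x" using elim by linarith
        then have "0 < ereal (Xp m n x)" by simp
        then have "0 < epos (m x)" unfolding Xp_e by simp
        then have "0 < m x" unfolding epos_def by (simp add: max_def split: if_splits)
        then have "eneg (m x) = 0" unfolding eneg_def by (cases "m x") auto
        then have "ereal (Xm m k x) = 0" unfolding Xm_e by simp
        then show ?thesis using True by (simp add: V_def)
      next
        case False then show ?thesis using Xm_b[of m k x] by (simp add: V_def)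
      qed
    qed
    then have "AE x in M. b k x \<le> V x" using Kb[of k, THEN conjunct2, rule_format, OF Vm] by simp
    then show ?thesis by eventually_elim (auto simp: V_def split: if_splits)
  qed
  then have "AE x in M. \<forall>n k. 0 < a n x \<longrightarrow> b k x \<le> 0" by (simp only: AE_all_countable) blast
  moreover have "AE x in M. \<forall>k. Xm m k x \<le> b k x" using b_ge by (simp add: AE_all_countable)
  ultimately show ?thesis
  proof eventually_elim
    case (elim x)
    show ?case
    proof
      assume "0 < AA x"
      then obtain n where "0 < ereal (a n x)" unfolding AA_def less_SUP_iff by blast
      then have "b k x = 0" for k using elim Xm_b[of m k x]
        by (metis ereal_less(2) order.trans order_antisym)
      then show "BB x = 0" unfolding BB_def by simp
    qed
  qed
qed

lemma F7:
  assumes S[measurable]: "S \<in> sets G" and q: "AE x in M. x \<in> S \<longrightarrow> ereal q \<le> m x"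
  shows "AE x in M. x \<in> S \<longrightarrow> ereal q \<le> esub (AA x) (BB x)"
proof (cases "0 < q")
  case True
  obtain n::nat where n: "q \<le> real n" using real_nat_ceiling_ge by blast
  define U where "U x = (if x \<in> S then q else 0)" for x
  have Um: "U \<in> borel_measurable G" unfolding U_def by measurable
  have "AE x in M. U x \<le> Xp m n x" using q
  proof eventually_elim
    case (elim x)
    show ?case
    proof (cases "x \<in> S")
      case True
      then have "ereal q \<le> m x" using elim by simp
      then have "ereal q \<le> epos (m x)" unfolding epos_def by (simp add: le_max_iff_disj)
      then have "ereal q \<le> min (epos (m x)) (ereal (real n))" using n by simp
      then have "ereal q \<le> ereal (Xp m n x)" unfolding Xp_e .
      then show ?thesis using True by (simp add: U_def)
    next
      case False then show ?thesis using Xp_b[of m n x] by (simp add: U_def)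
    qed
  qed
  then have "AE x in M. U x \<le> a n x" using Ka[of n, THEN conjunct2, rule_format, OF Um] by simp
  with F4 show ?thesis
  proof eventually_elim
    case (elim x)
    show ?case
    proof
      assume "x \<in> S"
      then have "q \<le> a n x" using elim by (simp add: U_def)
      then have qA: "ereal q \<le> AA x" unfolding AA_def by (intro SUP_upper2[of n]) auto
      then have "0 < AA x" using True by (metis ereal_less(2) less_le_trans)
      then have "BB x = 0" using elim by simp
      then have "esub (AA x) (BB x) = AA x" by (simp add: esub_def)
      then show "ereal q \<le> esub (AA x) (BB x)" using qA by simp
    qed
  qed
next
  case False
  have "AE x in M. x \<in> S \<longrightarrow> b k x \<le> - q" for k
  proof -
    define V where "V x = (if x \<in> S then - q else real k)" for x
    have Vm: "V \<in> borel_measurable G" unfolding V_def by measurable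
    have "AE x in M. Xm m k x \<le> V x" using q
    proof eventually_elim
      case (elim x)
      show ?case
      proof (cases "x \<in> S")
        case True
        then have "ereal q \<le> m x" using elim by simp
        then have "eneg (m x) \<le> ereal (- q)" using False unfolding eneg_def by (cases "m x") auto
        then have "ereal (Xm m k x) \<le> ereal (- q)" unfolding Xm_e by (simp add: min.coboundedI1)
        then show ?thesis using True by (simp add: V_def)
      next
        case False then show ?thesis using Xm_b[of m k x] by (simp add: V_def)
      qed
    qed
    then have "AE x in M. b k x \<le> V x" using Kb[of k, THEN conjunct2, rule_format, OF Vm] by simp
    then show ?thesis by eventually_elim (auto simp: V_def split: if_splits)
  qed
  then have "AE x in M. \<forall>k. x \<in> S \<longrightarrow> b k x \<le> - q" by (subst AE_all_countable) blast
  with AA_nn BB_nn show ?thesis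
  proof eventually_elim
    case (elim x)
    show ?case
    proof
      assume "x \<in> S"
      then have "BB x \<le> ereal (- q)" unfolding BB_def using elim by (auto intro!: SUP_least)
      then show "ereal q \<le> esub (AA x) (BB x)" using elim False unfolding esub_def
        by (cases "AA x"; cases "BB x") auto
    qed
  qed
qed

end
end


lemma P1: "0 \<le> z \<Longrightarrow> 0 \<le> A \<Longrightarrow> A \<le> epos mm \<Longrightarrow> ennreal z * e2ennreal A \<le> e2ennreal (ereal z * mm)"
proof -
  assume z: "0 \<le> z" and A: "0 \<le> A" "A \<le> epos mm"
  have "ennreal z * e2ennreal A = e2ennreal (ereal z * A)"
    using z A by (cases A) (auto simp: ennreal_mult'' e2ennreal_neg ennreal_mult_top)
  also have "\<dots> \<le> e2ennreal (ereal z * mm)"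
  proof (cases "0 \<le> mm")
    case True then have "A \<le> mm" using A unfolding epos_def by simp
    then show ?thesis using z by (intro e2ennreal_mono ereal_mult_left_mono) auto
  next
    case False then have "A = 0" using A unfolding epos_def by simp
    then show ?thesis by simp
  qed
  finally show ?thesis .
qed

lemma P2: "0 \<le> z \<Longrightarrow> eneg mm \<le> B \<Longrightarrow> e2ennreal (- (ereal z * mm)) \<le> ennreal z * e2ennreal B"
proof -
  assume z: "0 \<le> z" and B: "eneg mm \<le> B"
  have B0: "0 \<le> B" using B eneg_def by (metis max.bounded_iff order.trans order_refl)
  have "- (ereal z * mm) \<le> ereal z * B"
  proof -
    have "- (ereal z * mm) = ereal z * (- mm)" by simp
    also have "\<dots> \<le> ereal z * B" using z B unfolding eneg_def
      by (intro ereal_mult_left_mono) auto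
    finally show ?thesis .
  qed
  then have "e2ennreal (- (ereal z * mm)) \<le> e2ennreal (ereal z * B)" by (rule e2ennreal_mono)
  also have "e2ennreal (ereal z * B) = ennreal z * e2ennreal B"
    using z B0 by (cases B) (auto simp: ennreal_mult'' e2ennreal_neg ennreal_mult_top)
  finally show ?thesis .
qed

lemma P3: "0 \<le> A \<Longrightarrow> 0 \<le> B \<Longrightarrow> (0 < A \<longrightarrow> B = 0) \<Longrightarrow> A \<le> P \<Longrightarrow> Q \<le> B \<Longrightarrow> 0 \<le> Q \<Longrightarrow> 0 \<le> P \<Longrightarrow>
  esub A B \<le> esub P Q"
  unfolding esub_def by (cases A; cases B; cases P; cases Q) auto

lemma P4: "0 \<le> P \<Longrightarrow> P \<le> ereal (max q 0) \<Longrightarrow> ereal (max (- q) 0) \<le> Q \<Longrightarrow> esub P Q \<le> ereal q"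
  unfolding esub_def by (cases P; cases Q) (auto simp: max_def split: if_splits)


lemma P5: "0 \<le> z \<Longrightarrow> mm < ereal q \<Longrightarrow> e2ennreal (ereal z * mm) \<le> ennreal (max q 0) * ennreal z"
proof -
  assume z: "0 \<le> z" and m: "mm < ereal q"
  have "ereal z * mm \<le> ereal z * ereal q" using z m by (intro ereal_mult_left_mono) auto
  then have "ereal z * mm \<le> ereal (z * q)" by simp
  then have "e2ennreal (ereal z * mm) \<le> e2ennreal (ereal (z * q))" by (rule e2ennreal_mono)
  also have "\<dots> = ennreal (z * q)" by simp
  also have "\<dots> \<le> ennreal (max q 0 * z)" using z by (intro ennreal_leI) (auto simp: max_def mult.commute mult_left_mono mult_nonpos_nonneg)
  also have "\<dots> = ennreal (max q 0) * ennreal z" using z by (simp add: ennreal_mult)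
  finally show ?thesis .
qed

lemma P6: "0 \<le> z \<Longrightarrow> mm < ereal q \<Longrightarrow> ennreal (max (- q) 0) * ennreal z \<le> e2ennreal (- (ereal z * mm))"
proof -
  assume z: "0 \<le> z" and m: "mm < ereal q"
  show ?thesis
  proof (cases "q \<le> 0")
    case True
    have mq: "ereal (- q) \<le> - mm" using m by (cases mm) auto
    have "ereal z * ereal (- q) \<le> ereal z * (- mm)" using z mq by (intro ereal_mult_left_mono) auto
    then have "ereal (z * (- q)) \<le> ereal z * (- mm)" by simp
    then have "ereal (z * (- q)) \<le> - (ereal z * mm)" by simp
    then have "e2ennreal (ereal (z * (- q))) \<le> e2ennreal (- (ereal z * mm))" by (rule e2ennreal_mono)
    moreover have "ennreal (max (- q) 0) * ennreal z = e2ennreal (ereal (z * (- q)))"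
      using True z by (simp add: ennreal_mult[symmetric] max_def mult.commute)
    ultimately show ?thesis by simp
  next
    case False then show ?thesis by (simp add: max_def)
  qed
qed



lemma esub_meas[measurable]:
  assumes [measurable]: "f \<in> borel_measurable N" "g \<in> borel_measurable N"
  shows "(\<lambda>x. esub (f x) (g x)) \<in> borel_measurable N"
  unfolding esub_def by measurable

context PS begin

lemma CZ1:
  assumes Z[measurable]: "Z \<in> borel_measurable M" and Z0: "AE x in M. 0 \<le> Z x"
    and Z1: "AE x in M. gen_cond_exp M G (\<lambda>x. ereal (Z x)) x = 1"
  shows "AE x in M. C (\<lambda>x. ennreal (Z x)) x = 1"
proof -
  have "AE x in M. C (\<lambda>x. e2ennreal (- ereal (Z x))) x = C (\<lambda>_. 0) x"
    by (rule fms.nn_cond_exp_cong) (use Z0 in \<open>auto simp: ennreal_neg\<close>)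
  moreover have "AE x in M. gen_cond_exp M G (\<lambda>x. ereal (Z x)) x =
     esub (enn2ereal (C (\<lambda>x. e2ennreal (ereal (Z x))) x)) (enn2ereal (C (\<lambda>x. e2ennreal (- ereal (Z x))) x))"
    by (rule gce) simp
  ultimately show ?thesis using C_const[of 0] Z1
  proof eventually_elim
    case (elim x)
    then have "esub (enn2ereal (C (\<lambda>x. ennreal (Z x)) x)) 0 = 1" by (simp add: zero_ennreal.rep_eq)
    then have "enn2ereal (C (\<lambda>x. ennreal (Z x)) x) = 1" unfolding esub_def by (auto split: if_splits)
    then show ?case by (metis e2ennreal_enn2ereal e2ennreal_ereal ennreal_1 one_ereal_def)
  qed
qed

context
  fixes m :: "'a \<Rightarrow> ereal"
  assumes mM[measurable]: "m \<in> borel_measurable M"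
begin

lemma lower:
  assumes Z[measurable]: "Z \<in> borel_measurable M" and Z0: "AE x in M. 0 \<le> Z x"
    and Z1: "AE x in M. gen_cond_exp M G (\<lambda>x. ereal (Z x)) x = 1"
  shows "AE x in M. esub (AA m x) (BB m x) \<le> gen_cond_exp M G (\<lambda>x. ereal (Z x) * m x) x"
proof -
  have AAm'[measurable]: "AA m \<in> borel_measurable G" "BB m \<in> borel_measurable G" using AAm BBm mM by auto
  have cz: "AE x in M. C (\<lambda>x. ennreal (Z x)) x = 1" by (rule CZ1[OF Z Z0 Z1])
  have "AE x in M. ennreal (Z x) * e2ennreal (AA m x) \<le> e2ennreal (ereal (Z x) * m x)"
    using Z0 AA_nn[OF mM] AA_le[OF mM] by eventually_elim (rule P1)
  then have p1: "AE x in M. C (\<lambda>x. ennreal (Z x) * e2ennreal (AA m x)) x \<le> C (\<lambda>x. e2ennreal (ereal (Z x) * m x)) x"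
    by (rule fms.nn_cond_exp_mono) auto
  have "AE x in M. e2ennreal (- (ereal (Z x) * m x)) \<le> ennreal (Z x) * e2ennreal (BB m x)"
    using Z0 BB_ge[OF mM] by eventually_elim (rule P2)
  then have p2: "AE x in M. C (\<lambda>x. e2ennreal (- (ereal (Z x) * m x))) x \<le> C (\<lambda>x. ennreal (Z x) * e2ennreal (BB m x)) x"
    by (rule fms.nn_cond_exp_mono) auto
  have pa: "AE x in M. e2ennreal (AA m x) * C (\<lambda>x. ennreal (Z x)) x = C (\<lambda>x. e2ennreal (AA m x) * ennreal (Z x)) x"
    by (rule fms.nn_cond_exp_prod) auto
  have pb: "AE x in M. e2ennreal (BB m x) * C (\<lambda>x. ennreal (Z x)) x = C (\<lambda>x. e2ennreal (BB m x) * ennreal (Z x)) x"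
    by (rule fms.nn_cond_exp_prod) auto
  have g: "AE x in M. gen_cond_exp M G (\<lambda>x. ereal (Z x) * m x) x =
     esub (enn2ereal (C (\<lambda>x. e2ennreal (ereal (Z x) * m x)) x)) (enn2ereal (C (\<lambda>x. e2ennreal (- (ereal (Z x) * m x))) x))"
    by (rule gce) simp
  from g p1 p2 pa pb cz AA_nn[OF mM] BB_nn[OF mM] F4[OF mM] show ?thesis
  proof eventually_elim
    case (elim x)
    let ?P = "C (\<lambda>x. e2ennreal (ereal (Z x) * m x)) x"
    let ?Q = "C (\<lambda>x. e2ennreal (- (ereal (Z x) * m x))) x"
    have "e2ennreal (AA m x) \<le> ?P" using elim by (simp add: mult.commute)
    then have a: "AA m x \<le> enn2ereal ?P" using elim
      by (metis enn2ereal_e2ennreal less_eq_ennreal.rep_eq)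
    have "?Q \<le> e2ennreal (BB m x)" using elim by (simp add: mult.commute)
    then have b: "enn2ereal ?Q \<le> BB m x" using elim
      by (metis enn2ereal_e2ennreal less_eq_ennreal.rep_eq)
    show ?case unfolding elim(1)
      by (rule P3) (use elim a b in \<open>auto simp: enn2ereal_nonneg\<close>)
  qed
qed


lemma approx:
  fixes q :: real
  assumes NG: "subalgebra N G" and NM: "subalgebra M N" and mN[measurable]: "m \<in> borel_measurable N"
  shows "\<exists>Z. Z \<in> borel_measurable N \<and> (\<forall>x. 0 \<le> Z x) \<and> (AE x in M. C (\<lambda>x. ennreal (Z x)) x = 1) \<and>
    (AE x in M. esub (AA m x) (BB m x) < ereal q \<longrightarrow> gen_cond_exp M G (\<lambda>x. ereal (Z x) * m x) x \<le> ereal q)"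
proof -
  have AAm'[measurable]: "AA m \<in> borel_measurable G" "BB m \<in> borel_measurable G" using AAm BBm mM by auto
  have spG: "space G = space M" using subG by (simp add: subalgebra_def)
  have spN: "space N = space M" using NM by (simp add: subalgebra_def)
  define D where "D = {x\<in>space M. esub (AA m x) (BB m x) < ereal q}"
  have DG[measurable]: "D \<in> sets G" unfolding D_def spG[symmetric] by measurable
  have DM[measurable]: "D \<in> sets M" using setG_M[OF DG] .
  define I :: "'a \<Rightarrow> ennreal" where "I x = indicator {x\<in>space M. m x < ereal q} x" for x
  have IM[measurable]: "(I :: 'a \<Rightarrow> ennreal) \<in> borel_measurable M" unfolding I_def by measurable
  define p where "p = C I"
  have pG[measurable]: "p \<in> borel_measurable G" unfolding p_def by measurable
  define R where "R = {x\<in>space M. x \<in> D \<and> p x = 0}"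
  have RG[measurable]: "R \<in> sets G" unfolding R_def spG[symmetric] by measurable
  have RM[measurable]: "R \<in> sets M" using setG_M[OF RG] .
  have "(\<integral>\<^sup>+ x. indicator R x * I x \<partial>M) = (\<integral>\<^sup>+ x. indicator R x * p x \<partial>M)"
    unfolding p_def by (rule fms.nn_cond_exp_intg[symmetric]) auto
  also have "\<dots> = (\<integral>\<^sup>+ x. 0 \<partial>M)" by (intro nn_integral_cong) (auto simp: R_def indicator_def)
  finally have "(\<integral>\<^sup>+ x. indicator R x * I x \<partial>M) = 0" by simp
  then have "AE x in M. indicator R x * I x = 0" by (subst (asm) nn_integral_0_iff_AE) auto
  then have "AE x in M. x \<in> R \<longrightarrow> ereal q \<le> m x"
    by eventually_elim (auto simp: I_def indicator_def R_def not_less)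
  from F7[OF mM RG this] have "AE x in M. x \<notin> R"
    by eventually_elim (auto simp: R_def D_def)
  moreover have "AE x in M. p x \<le> 1"
  proof -
    have "AE x in M. C I x \<le> C (\<lambda>_. 1) x" by (rule fms.nn_cond_exp_mono) (auto simp: I_def indicator_def)
    with C_const[of 1] show ?thesis unfolding p_def by eventually_elim simp
  qed
  ultimately have pD: "AE x in M. x \<in> D \<longrightarrow> 0 < p x \<and> p x \<le> 1"
    by eventually_elim (auto simp: R_def D_def zero_less_iff_neq_zero)
  define Z where "Z x = (if x \<in> D then (if m x < ereal q then 1 / enn2real (p x) else 0) else 1)" for x
  have subNG: "sets G \<subseteq> sets N" using NG by (simp add: subalgebra_def)
  have DN[measurable]: "D \<in> sets N" using DG subNG by auto
  have pN[measurable]: "p \<in> borel_measurable N" using measurable_from_subalg[OF NG pG] .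
  have ZN[measurable]: "Z \<in> borel_measurable N" unfolding Z_def by measurable
  have ZM[measurable]: "Z \<in> borel_measurable M" using measurable_from_subalg[OF NM ZN] .
  have Z0: "0 \<le> Z x" for x unfolding Z_def by auto
  define g where "g x = ennreal (1 / enn2real (p x))" for x
  have gG[measurable]: "g \<in> borel_measurable G" unfolding g_def by measurable
  have eqZ: "AE x in M. ennreal (Z x) = indicator D x * g x * I x + indicator (space M - D) x"
    by (intro AE_I2) (auto simp: Z_def g_def I_def indicator_def)
  have s1: "AE x in M. C (\<lambda>x. ennreal (Z x)) x = C (\<lambda>x. indicator D x * g x * I x + indicator (space M - D) x) x"
    by (rule fms.nn_cond_exp_cong[OF eqZ]) auto
  have s2: "AE x in M. C (\<lambda>x. indicator D x * g x * I x) x + C (\<lambda>x. indicator (space M - D) x) x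
      = C (\<lambda>x. indicator D x * g x * I x + indicator (space M - D) x) x"
    by (rule fms.nn_cond_exp_sum) auto
  have s3: "AE x in M. (indicator D x * g x) * C I x = C (\<lambda>x. indicator D x * g x * I x) x"
    by (rule fms.nn_cond_exp_prod) auto
  have s4: "AE x in M. (indicator (space M - D) x :: ennreal) = C (\<lambda>x. indicator (space M - D) x) x"
  proof (rule fms.nn_cond_exp_F_meas)
    have "space M - D \<in> sets G" using DG spG by (metis sets.compl_sets)
    then show "(\<lambda>x. indicator (space M - D) x :: ennreal) \<in> borel_measurable G" by measurable
  qed
  have CZ: "AE x in M. C (\<lambda>x. ennreal (Z x)) x = 1"
    using s1 s2 s3 s4 pD AE_space
  proof eventually_elim
    case (elim x)
    show ?case
    proof (cases "x \<in> D")
      case True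
      then have p: "0 < p x" "p x \<le> 1" using elim by auto
      have "p x \<noteq> top" using p(2) by (auto simp: top_unique)
      then obtain r where r0: "p x = ennreal r" "0 \<le> r" by (cases "p x" rule: ennreal_cases) auto
      with p(1) have r: "p x = ennreal r" "0 < r" by auto
      have "g x * p x = 1" using r by (simp add: g_def ennreal_mult[symmetric])
      then show ?thesis using elim True by (simp add: p_def mult.commute)
    next
      case False
      then show ?thesis using elim by (simp add: indicator_def)
    qed
  qed
  have u1: "AE x in M. C (\<lambda>x. indicator D x * e2ennreal (ereal (Z x) * m x)) x \<le> C (\<lambda>x. (indicator D x * ennreal (max q 0)) * ennreal (Z x)) x"
  proof (rule fms.nn_cond_exp_mono)
    show "AE x in M. indicator D x * e2ennreal (ereal (Z x) * m x) \<le> (indicator D x * ennreal (max q 0)) * ennreal (Z x)"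
    proof (intro AE_I2)
      fix x show "indicator D x * e2ennreal (ereal (Z x) * m x) \<le> (indicator D x * ennreal (max q 0)) * ennreal (Z x)"
        using P5[OF Z0[of x], of "m x" q] by (auto simp: Z_def indicator_def mult.assoc zero_ereal_def[symmetric])
    qed
  qed auto
  have u2: "AE x in M. C (\<lambda>x. (indicator D x * ennreal (max (- q) 0)) * ennreal (Z x)) x \<le> C (\<lambda>x. indicator D x * e2ennreal (- (ereal (Z x) * m x))) x"
  proof (rule fms.nn_cond_exp_mono)
    show "AE x in M. (indicator D x * ennreal (max (- q) 0)) * ennreal (Z x) \<le> indicator D x * e2ennreal (- (ereal (Z x) * m x))"
    proof (intro AE_I2)
      fix x show "(indicator D x * ennreal (max (- q) 0)) * ennreal (Z x) \<le> indicator D x * e2ennreal (- (ereal (Z x) * m x))"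
        using P6[OF Z0[of x], of "m x" q] by (auto simp: Z_def indicator_def mult.assoc zero_ereal_def[symmetric])
    qed
  qed auto
  have u3: "AE x in M. indicator D x * C (\<lambda>x. e2ennreal (ereal (Z x) * m x)) x = C (\<lambda>x. indicator D x * e2ennreal (ereal (Z x) * m x)) x"
    by (rule fms.nn_cond_exp_prod) auto
  have u4: "AE x in M. indicator D x * C (\<lambda>x. e2ennreal (- (ereal (Z x) * m x))) x = C (\<lambda>x. indicator D x * e2ennreal (- (ereal (Z x) * m x))) x"
    by (rule fms.nn_cond_exp_prod) auto
  have u5: "AE x in M. (indicator D x * ennreal (max q 0)) * C (\<lambda>x. ennreal (Z x)) x = C (\<lambda>x. (indicator D x * ennreal (max q 0)) * ennreal (Z x)) x"
    by (rule fms.nn_cond_exp_prod) auto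
  have u6: "AE x in M. (indicator D x * ennreal (max (- q) 0)) * C (\<lambda>x. ennreal (Z x)) x = C (\<lambda>x. (indicator D x * ennreal (max (- q) 0)) * ennreal (Z x)) x"
    by (rule fms.nn_cond_exp_prod) auto
  have g: "AE x in M. gen_cond_exp M G (\<lambda>x. ereal (Z x) * m x) x =
     esub (enn2ereal (C (\<lambda>x. e2ennreal (ereal (Z x) * m x)) x)) (enn2ereal (C (\<lambda>x. e2ennreal (- (ereal (Z x) * m x))) x))"
    by (rule gce) simp
  have "AE x in M. esub (AA m x) (BB m x) < ereal q \<longrightarrow> gen_cond_exp M G (\<lambda>x. ereal (Z x) * m x) x \<le> ereal q"
    using u1 u2 u3 u4 u5 u6 g CZ AE_space
  proof eventually_elim
    case (elim x)
    show ?case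
    proof
      assume "esub (AA m x) (BB m x) < ereal q"
      moreover have "x \<in> space M" using elim(9) .
      ultimately have xD: "x \<in> D" unfolding D_def by auto
      let ?P = "C (\<lambda>x. e2ennreal (ereal (Z x) * m x)) x"
      let ?Q = "C (\<lambda>x. e2ennreal (- (ereal (Z x) * m x))) x"
      have "?P \<le> ennreal (max q 0)" using elim xD by simp
      then have a: "enn2ereal ?P \<le> ereal (max q 0)"
        by (metis enn2ereal_ennreal less_eq_ennreal.rep_eq max.cobounded2)
      have "ennreal (max (- q) 0) \<le> ?Q" using elim xD by simp
      then have b: "ereal (max (- q) 0) \<le> enn2ereal ?Q"
        by (metis enn2ereal_ennreal less_eq_ennreal.rep_eq max.cobounded2)
      show "gen_cond_exp M G (\<lambda>x. ereal (Z x) * m x) x \<le> ereal q"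
        unfolding elim(7) by (rule P4[OF _ a b]) (simp add: enn2ereal_nonneg)
    qed
  qed
  then show ?thesis using ZN Z0 CZ by blast
qed

end
end


context PS begin

lemma Pset_of:
  assumes ZM[measurable]: "Z \<in> borel_measurable M" and Z0: "\<And>x. 0 \<le> Z x" and CZ: "AE x in M. C (\<lambda>x. ennreal (Z x)) x = 1"
  shows "AE x in M. gen_cond_exp M G (\<lambda>x. ereal (Z x)) x = 1"
proof -
  have e: "(\<lambda>x. e2ennreal (- ereal (Z x))) = (\<lambda>_. 0)" using Z0 by (auto simp: fun_eq_iff ennreal_neg)
  have "AE x in M. gen_cond_exp M G (\<lambda>x. ereal (Z x)) x =
     esub (enn2ereal (C (\<lambda>x. e2ennreal (ereal (Z x))) x)) (enn2ereal (C (\<lambda>x. e2ennreal (- ereal (Z x))) x))"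
    by (rule gce) simp
  with CZ C_const[of 0] show ?thesis unfolding e
    by eventually_elim (simp add: esub_def zero_ennreal.rep_eq one_ennreal.rep_eq)
qed

context
  fixes m :: "'a \<Rightarrow> ereal"
  assumes mM[measurable]: "m \<in> borel_measurable M"
begin
lemma ce_eq: "cond_essinf M G m = (\<lambda>x. esub (AA m x) (BB m x))"
proof -
  have e: "Xp m = (\<lambda>n x. real_of_ereal (min (epos (m x)) (ereal (real n))))"
    "Xm m = (\<lambda>n x. real_of_ereal (min (eneg (m x)) (ereal (real n))))"
    by (simp_all add: fun_eq_iff Xp_def Xm_def)
  show ?thesis unfolding cond_essinf_def AA_def[OF mM] BB_def[OF mM] a_def[OF mM] b_def[OF mM] e ..
qed
end

end

lemma ereal_rat_between:
  fixes a b :: ereal assumes "a < b" shows "\<exists>q\<in>\<rat>. a < ereal q \<and> ereal q < b"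
proof -
  obtain r1 where r1: "a < ereal r1" "ereal r1 < b" using ereal_dense2[OF assms] by blast
  obtain r2 where r2: "ereal r1 < ereal r2" "ereal r2 < b" using ereal_dense2[OF r1(2)] by blast
  obtain q where "q \<in> \<rat>" "r1 < q" "q < r2" using Rats_dense_in_real[of r1 r2] r2 by auto
  with r1 r2 show ?thesis by (metis ereal_less(2) less_ereal.simps(1) order.strict_trans)
qed

theorem proposition4p4:
  fixes M :: "'a measure" and F :: "nat \<Rightarrow> 'a measure" and T :: nat
    and m :: "'a \<Rightarrow> ereal" and t :: nat
  assumes "prob_space M"
    and "\<And>s. subalgebra M (F s)"
    and "\<And>s u. s \<le> u \<Longrightarrow> sets (F s) \<subseteq> sets (F u)"
    and "sets (F 0) = {{}, space M}"
    and "m \<in> borel_measurable (F T)"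
    and "t \<le> T"
  shows "AE \<omega> in M. cond_essinf M (F t) m \<omega> =
           ess_inf_family M (F T)
             ((\<lambda>Z. gen_cond_exp M (F t) (\<lambda>x. ereal (Z x) * m x)) ` Pset M (F T) (F t)) \<omega>"
proof -
  interpret PS M "F t" using assms(1,2) by (simp add: PS_def PS_axioms_def)
  define N where "N = F T"
  define G where "G = F t"
  have NM: "subalgebra M N" using assms(2) by (simp add: N_def)
  have NG: "subalgebra N G" using assms(2)[of t] assms(2)[of T] assms(3)[OF assms(6)]
    by (simp add: subalgebra_def N_def G_def)
  have mN[measurable]: "m \<in> borel_measurable N" using assms(5) by (simp add: N_def)
  have mM[measurable]: "m \<in> borel_measurable M" using measurable_from_subalg[OF NM mN] .
  define S where "S = (\<lambda>Z. gen_cond_exp M (F t) (\<lambda>x. ereal (Z x) * m x)) ` Pset M (F T) (F t)"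
  define Y0 where "Y0 = cond_essinf M (F t) m"
  have Y0e: "Y0 = (\<lambda>x. esub (AA m x) (BB m x))" unfolding Y0_def by (rule ce_eq[OF mM])
  have isY0: "is_ess_inf_family M N S Y0"
    unfolding is_ess_inf_family_def
  proof (intro conjI ballI allI impI)
    have "Y0 \<in> borel_measurable (F t)" unfolding Y0e using AAm[OF mM] BBm[OF mM] by measurable
    then show "Y0 \<in> borel_measurable N" using measurable_from_subalg[OF NG] by (simp add: G_def)
  next
    fix X assume "X \<in> S"
    then obtain Z where Z: "Z \<in> Pset M (F T) (F t)" and X: "X = gen_cond_exp M (F t) (\<lambda>x. ereal (Z x) * m x)"
      unfolding S_def by blast
    have ZN: "Z \<in> borel_measurable N" using Z by (simp add: Pset_def N_def)
    have ZM: "Z \<in> borel_measurable M" using measurable_from_subalg[OF NM ZN] .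
    show "AE \<omega> in M. Y0 \<omega> \<le> X \<omega>" unfolding X Y0e
      by (rule lower[OF mM ZM]) (use Z in \<open>simp_all add: Pset_def\<close>)
  next
    fix Y' assume Y': "Y' \<in> borel_measurable N \<and> (\<forall>X\<in>S. AE \<omega> in M. Y' \<omega> \<le> X \<omega>)"
    have "AE x in M. Y0 x < ereal q \<longrightarrow> Y' x \<le> ereal q" for q
    proof -
      obtain Z where Z: "Z \<in> borel_measurable N" "\<forall>x. 0 \<le> Z x" "AE x in M. C (\<lambda>x. ennreal (Z x)) x = 1"
        "AE x in M. esub (AA m x) (BB m x) < ereal q \<longrightarrow> gen_cond_exp M (F t) (\<lambda>x. ereal (Z x) * m x) x \<le> ereal q"
        using approx[OF mM, of N q] NG NM mN by (auto simp: G_def)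
      have ZM: "Z \<in> borel_measurable M" using measurable_from_subalg[OF NM Z(1)] .
      have "Z \<in> Pset M (F T) (F t)" unfolding Pset_def
        using Z(1,2) Pset_of[OF ZM _ Z(3)] by (auto simp: N_def)
      then have "gen_cond_exp M (F t) (\<lambda>x. ereal (Z x) * m x) \<in> S" unfolding S_def by blast
      with Y' have "AE x in M. Y' x \<le> gen_cond_exp M (F t) (\<lambda>x. ereal (Z x) * m x) x" by blast
      with Z(4) show ?thesis unfolding Y0e by eventually_elim auto
    qed
    then have "AE x in M. \<forall>q\<in>\<rat>. Y0 x < ereal q \<longrightarrow> Y' x \<le> ereal q"
      by (subst AE_ball_countable) (auto simp: countable_rat)
    then show "AE \<omega> in M. Y' \<omega> \<le> Y0 \<omega>"
    proof eventually_elim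
      case (elim x)
      show ?case
      proof (rule ccontr)
        assume "\<not> Y' x \<le> Y0 x"
        then obtain q where "q \<in> \<rat>" "Y0 x < ereal q" "ereal q < Y' x"
          using ereal_rat_between[of "Y0 x" "Y' x"] by (auto simp: not_le)
        with elim show False by force
      qed
    qed
  qed
  have "\<exists>Y. is_ess_inf_family M N S Y" using isY0 by blast
  then have isY1: "is_ess_inf_family M N S (ess_inf_family M N S)"
    unfolding ess_inf_family_def by (rule someI_ex)
  have "AE x in M. Y0 x \<le> ess_inf_family M N S x"
    using isY1 isY0 unfolding is_ess_inf_family_def by blast
  moreover have "AE x in M. ess_inf_family M N S x \<le> Y0 x"
    using isY1 isY0 unfolding is_ess_inf_family_def by blast
  ultimately show ?thesis unfolding Y0_def S_def N_def by eventually_elim simp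
qed


end
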